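(* Fix a single machine with nonnegative real parameters $k^A,k^B,t^A,t^B$, and let $f(a,b)$, $cost^A$, $cost^B$, $mcost^A$ and $cost(a,b,s)$ be as defined in the context. Then for all integers $a,b\ge 0$, $$f(a,b)=\min_{0\le s\le \min(b,a+1)} cost(a,b,s).$$
   Context: A machine processes jobs of two types, A and B, in batches. A schedule for the task-combination $(a,b)$ is a finite sequence of batches, each a nonempty group of jobs of a single type, with consecutive batches of different types, processing exactly $a$ A-jobs and $b$ B-jobs in total. An A-batch of $x$ jobs takes $t^A+k^A x^2$ time units, a B-batch of $x$ jobs takes $t^B+k^B x^2$ time units; the time of a schedule is the sum of its batch times (empty schedule: time $0$). $f(a,b)$ is the minimum time over all schedules for $(a,b)$. For integers $a,s\ge 0$ define $cost^A(a,s)=\min\{s\,t^A+k^A(x_1^2+\dots+x_s^2) : x_1+\dots+x_s=a,\ x_i\in\mathbb{Z}_{\ge 0}\}$ (empty batches allowed here), with $cost^A(0,0)=0$ and $cost^A(a,0)=+\infty$ for $a>0$; $cost^B(b,s)$ is defined analogously with $t^B,k^B$. Define $mcost^A(a,s)=\min\{cost^A(a,s') : s'\in\{s-1,s,s+1\},\ s'\ge 0\}$ and $cost(a,b,s)=cost^B(b,s)+mcost^A(a,s)$, with the usual arithmetic conventions for $+\infty$. *)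

theory Defs
  imports Complex_Main "HOL-Library.Extended_Real"
begin

datatype jobtype = TA | TB

type_synonym batch = "jobtype \<times> nat"
type_synonym schedule = "batch list"

definition valid_schedule :: "nat \<Rightarrow> nat \<Rightarrow> schedule \<Rightarrow> bool" where
  "valid_schedule a b S \<longleftrightarrow>
     (\<forall>bt \<in> set S. snd bt > 0) \<and>
     (\<forall>i. Suc i < length S \<longrightarrow> fst (S ! i) \<noteq> fst (S ! Suc i)) \<and>
     sum_list (map snd (filter (\<lambda>bt. fst bt = TA) S)) = a \<and>
     sum_list (map snd (filter (\<lambda>bt. fst bt = TB) S)) = b"

definition batch_time :: "real \<Rightarrow> real \<Rightarrow> real \<Rightarrow> real \<Rightarrow> batch \<Rightarrow> real" where
  "batch_time kA kB tA tB bt =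
     (case fst bt of TA \<Rightarrow> tA + kA * (real (snd bt))^2
                   | TB \<Rightarrow> tB + kB * (real (snd bt))^2)"

definition sched_time :: "real \<Rightarrow> real \<Rightarrow> real \<Rightarrow> real \<Rightarrow> schedule \<Rightarrow> real" where
  "sched_time kA kB tA tB S = sum_list (map (batch_time kA kB tA tB) S)"

definition fopt :: "real \<Rightarrow> real \<Rightarrow> real \<Rightarrow> real \<Rightarrow> nat \<Rightarrow> nat \<Rightarrow> ereal" where
  "fopt kA kB tA tB a b =
     Inf {ereal (sched_time kA kB tA tB S) | S. valid_schedule a b S}"

text \<open>cost(a,s) for one job type with parameters t,k: s batches (empty allowed)
  of total size a; infimum over the empty set is +infinity (the case s = 0, a > 0).\<close>
definition cost1 :: "real \<Rightarrow> real \<Rightarrow> nat \<Rightarrow> nat \<Rightarrow> ereal" where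
  "cost1 t k a s =
     Inf {ereal (real s * t + k * (\<Sum>x\<leftarrow>xs. (real x)^2)) | xs. length xs = s \<and> sum_list xs = a}"

definition mcost1 :: "real \<Rightarrow> real \<Rightarrow> nat \<Rightarrow> nat \<Rightarrow> ereal" where
  "mcost1 t k a s = Min ((\<lambda>s'. cost1 t k a s') ` {s'. s' \<le> s + 1 \<and> s \<le> s' + 1})"

definition cost :: "real \<Rightarrow> real \<Rightarrow> real \<Rightarrow> real \<Rightarrow> nat \<Rightarrow> nat \<Rightarrow> nat \<Rightarrow> ereal" where
  "cost kA kB tA tB a b s = cost1 tB kB b s + mcost1 tA kA a s"

end

theory Submission
  imports Defs
begin

definition nsq :: "nat list \<Rightarrow> nat" where "nsq xs = sum_list (map (\<lambda>x. x^2) xs)"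

lemma real_nsq: "real (nsq xs) = (\<Sum>x\<leftarrow>xs. (real x)^2)"
  by (induction xs) (auto simp: nsq_def)

lemma sum_remove1: "x \<in> set xs \<Longrightarrow> sum_list xs = x + sum_list (remove1 x xs)" for xs :: "nat list"
  by (induction xs) auto

lemma nsq_remove1: "x \<in> set xs \<Longrightarrow> nsq xs = x^2 + nsq (remove1 x xs)"
  by (induction xs) (auto simp: nsq_def)

lemma le1_sum: "\<forall>x\<in>set xs. x \<le> (1::nat) \<Longrightarrow> sum_list xs \<le> length xs"
  by (induction xs) auto

lemma pos_len: "\<forall>x\<in>set xs. 0 < (x::nat) \<Longrightarrow> length xs \<le> sum_list xs"
  by (induction xs) auto

lemma elem_le_sum: "x \<in> set xs \<Longrightarrow> x \<le> sum_list (xs::nat list)"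
  by (induction xs) auto

lemma spread:
  "length xs \<le> sum_list xs \<Longrightarrow> \<exists>ys. length ys = length xs \<and> sum_list ys = sum_list xs \<and>
     (\<forall>y\<in>set ys. 0 < y) \<and> nsq ys \<le> nsq xs"
proof (induction "nsq xs" arbitrary: xs rule: less_induct)
  case less
  show ?case
  proof (cases "\<forall>y\<in>set xs. 0 < y")
    case True then show ?thesis by auto
  next
    case False
    then have z: "0 \<in> set xs" by auto
    have "\<exists>m\<in>set xs. 2 \<le> m"
    proof (rule ccontr)
      assume nm: "\<not> (\<exists>m\<in>set xs. 2 \<le> m)"
      have "\<forall>x\<in>set (remove1 0 xs). x \<le> 1"
      proof
        fix x assume "x \<in> set (remove1 0 xs)"
        then have "x \<in> set xs" using set_remove1_subset[of 0 xs] by blast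
        then have "\<not> 2 \<le> x" using nm by blast
        then show "x \<le> 1" by simp
      qed
      then have "sum_list (remove1 0 xs) \<le> length (remove1 0 xs)" by (rule le1_sum)
      moreover have "sum_list xs = sum_list (remove1 0 xs)" using sum_remove1[OF z] by simp
      moreover have "length (remove1 0 xs) = length xs - 1" using z by (simp add: length_remove1)
      moreover have "length xs > 0" using z by (cases xs) auto
      ultimately show False using less.prems by linarith
    qed
    then obtain m where m: "m \<in> set xs" "2 \<le> m" by blast
    have m': "m \<in> set (remove1 0 xs)" using m by auto
    define rest where "rest = remove1 m (remove1 0 xs)"
    define xs' where "xs' = 1 # (m-1) # rest"
    have s1: "sum_list xs = m + sum_list rest"
      using sum_remove1[OF z] sum_remove1[OF m'] unfolding rest_def by simp
    have q1: "nsq xs = m^2 + nsq rest"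
      using nsq_remove1[OF z] nsq_remove1[OF m'] unfolding rest_def by simp
    have l0: "length (remove1 0 xs) = length xs - 1" using z by (simp add: length_remove1)
    have l0': "length rest = length (remove1 0 xs) - 1" using m' unfolding rest_def by (simp add: length_remove1)
    have p0: "length xs > 0" using z by (cases xs) auto
    have p1: "length (remove1 0 xs) > 0" using m' by (cases "remove1 0 xs") auto
    have l1: "length xs = Suc (Suc (length rest))"
      using l0 l0' p0 p1 by linarith
    obtain j where j: "m = Suc (Suc j)" using m(2) by (cases m; cases "m - 1") auto
    have "nsq xs' = 1 + (m-1)^2 + nsq rest" unfolding xs'_def by (simp add: nsq_def)
    also have "... < m^2 + nsq rest" by (simp add: j power2_eq_square)
    finally have "nsq xs' < nsq xs" using q1 by simp
    moreover have "length xs' = length xs" "sum_list xs' = sum_list xs"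
      unfolding xs'_def using l1 s1 m(2) by auto
    ultimately have "\<exists>ys. length ys = length xs' \<and> sum_list ys = sum_list xs' \<and>
       (\<forall>y\<in>set ys. 0 < y) \<and> nsq ys \<le> nsq xs'"
      using less.hyps[of xs'] less.prems by simp
    then obtain ys where "length ys = length xs'" "sum_list ys = sum_list xs'"
        "\<forall>y\<in>set ys. 0 < y" "nsq ys \<le> nsq xs'"
      by blast
    then show ?thesis using \<open>nsq xs' < nsq xs\<close> \<open>length xs' = length xs\<close> \<open>sum_list xs' = sum_list xs\<close>
      by (intro exI[of _ ys]) auto
  qed
qed


fun flip :: "jobtype \<Rightarrow> jobtype" where "flip TA = TB" | "flip TB = TA"

lemma flip_flip[simp]: "flip (flip T) = T" by (cases T) auto
lemma flip_neq[simp]: "flip T \<noteq> T" "T \<noteq> flip T" by (cases T; simp)+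

function mk :: "jobtype \<Rightarrow> nat list \<Rightarrow> nat list \<Rightarrow> schedule" where
  "mk T [] ys = []"
| "mk T (x # xs) ys = (T, x) # mk (flip T) ys xs"
  by pat_completeness auto
termination by (relation "measure (\<lambda>(T, xs, ys). length xs + length ys)") auto

lemma mk_filter:
  "length ys \<le> length xs \<Longrightarrow> length xs \<le> Suc (length ys) \<Longrightarrow>
   map snd (filter (\<lambda>bt. fst bt = T) (mk T xs ys)) = xs \<and>
   map snd (filter (\<lambda>bt. fst bt = flip T) (mk T xs ys)) = ys"
proof (induction T xs ys rule: mk.induct)
  case (1 T ys) then show ?case by simp
next
  case (2 T x xs ys)
  then have "length xs \<le> length ys" "length ys \<le> Suc (length xs)" by auto
  from "2.IH"[OF this] show ?case by simp
qed

lemma mk_set: "bt \<in> set (mk T xs ys) \<Longrightarrow> snd bt \<in> set xs \<union> set ys"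
  by (induction T xs ys rule: mk.induct) auto

lemma mk_nth: "i < length (mk T xs ys) \<Longrightarrow> fst (mk T xs ys ! i) = (if even i then T else flip T)"
proof (induction T xs ys arbitrary: i rule: mk.induct)
  case (1 T ys) then show ?case by simp
next
  case (2 T x xs ys)
  show ?case
  proof (cases i)
    case 0 then show ?thesis by simp
  next
    case (Suc j)
    then show ?thesis using "2.IH"[of j] "2.prems" by auto
  qed
qed

lemma mk_alt: "\<forall>i. Suc i < length (mk T xs ys) \<longrightarrow> fst (mk T xs ys ! i) \<noteq> fst (mk T xs ys ! Suc i)"
  using mk_nth by (metis Suc_lessD even_Suc flip_neq(1))

definition asz :: "schedule \<Rightarrow> nat list" where "asz S = map snd (filter (\<lambda>bt. fst bt = TA) S)"
definition bsz :: "schedule \<Rightarrow> nat list" where "bsz S = map snd (filter (\<lambda>bt. fst bt = TB) S)"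

lemma sched_split:
  "sched_time kA kB tA tB S =
     (real (length (asz S)) * tA + kA * (\<Sum>x\<leftarrow>asz S. (real x)^2))
   + (real (length (bsz S)) * tB + kB * (\<Sum>x\<leftarrow>bsz S. (real x)^2))"
proof (induction S)
  case Nil then show ?case by (simp add: sched_time_def asz_def bsz_def)
next
  case (Cons bt S)
  obtain T n where bt: "bt = (T, n)" by (cases bt)
  show ?case
  proof (cases T)
    case TA then show ?thesis using Cons
      by (simp add: sched_time_def asz_def bsz_def bt batch_time_def algebra_simps)
  next
    case TB then show ?thesis using Cons
      by (simp add: sched_time_def asz_def bsz_def bt batch_time_def algebra_simps)
  qed
qed

lemma alt_counts:
  assumes "\<forall>i. Suc i < length S \<longrightarrow> fst (S ! i) \<noteq> fst (S ! Suc i)"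
  shows "length (bsz S) \<le> Suc (length (asz S)) \<and> length (asz S) \<le> Suc (length (bsz S)) \<and>
    (S \<noteq> [] \<longrightarrow> (fst (hd S) = TA \<longrightarrow> length (bsz S) \<le> length (asz S)) \<and>
                  (fst (hd S) = TB \<longrightarrow> length (asz S) \<le> length (bsz S)))"
  using assms
proof (induction S)
  case Nil then show ?case by (simp add: asz_def bsz_def)
next
  case (Cons bt S)
  have alt: "\<forall>i. Suc i < length S \<longrightarrow> fst (S ! i) \<noteq> fst (S ! Suc i)"
  proof (intro allI impI)
    fix i assume "Suc i < length S"
    then show "fst (S ! i) \<noteq> fst (S ! Suc i)" using Cons.prems[rule_format, of "Suc i"] by simp
  qed
  note IH = Cons.IH[OF alt]
  obtain T n where bt: "bt = (T, n)" by (cases bt)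
  show ?case
  proof (cases S)
    case Nil then show ?thesis by (cases T) (auto simp: asz_def bsz_def bt)
  next
    case (Cons c S')
    have "fst c \<noteq> T" using Cons.prems[rule_format, of 0] \<open>S = c # S'\<close> bt by simp
    then show ?thesis using IH \<open>S = c # S'\<close>
      by (cases T; cases "fst c") (auto simp: asz_def bsz_def bt)
  qed
qed


lemma cost1_le:
  assumes "length xs = s" "sum_list xs = a"
  shows "cost1 t k a s \<le> ereal (real s * t + k * (\<Sum>x\<leftarrow>xs. (real x)^2))"
  unfolding cost1_def by (rule Inf_lower) (use assms in blast)

lemma cost1_cases:
  "cost1 t k a s = \<infinity> \<or> (\<exists>xs. length xs = s \<and> sum_list xs = a \<and>
      cost1 t k a s = ereal (real s * t + k * (\<Sum>x\<leftarrow>xs. (real x)^2)))"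
proof -
  define L where "L = {xs. length xs = s \<and> sum_list xs = a}"
  define g where "g = (\<lambda>xs. ereal (real s * t + k * (\<Sum>x\<leftarrow>xs. (real x)^2)))"
  have c: "cost1 t k a s = Inf (g ` L)"
    unfolding cost1_def L_def g_def by (intro arg_cong[where f=Inf]) auto
  have "L \<subseteq> {xs. set xs \<subseteq> {0..a} \<and> length xs = s}"
    unfolding L_def using elem_le_sum by fastforce
  then have fin: "finite L" using finite_subset finite_lists_length_eq[of "{0..a}" s] by blast
  show ?thesis
  proof (cases "L = {}")
    case True then show ?thesis using c by (simp add: top_ereal_def)
  next
    case False
    then have "Inf (g ` L) = Min (g ` L)" using fin by (simp add: cInf_eq_Min)
    moreover have "Min (g ` L) \<in> g ` L" using fin False by (simp add: Min_in)
    ultimately show ?thesis using c unfolding L_def g_def by auto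
  qed
qed

lemma build:
  assumes ys: "\<forall>y\<in>set ys. 0 < y" "length ys = s" "sum_list ys = b"
    and xs: "\<forall>x\<in>set xs. 0 < x" "length xs = r" "sum_list xs = a"
    and rs: "r \<le> Suc s" "s \<le> Suc r"
  shows "fopt kA kB tA tB a b \<le> ereal ((real r * tA + kA * (\<Sum>x\<leftarrow>xs. (real x)^2))
            + (real s * tB + kB * (\<Sum>x\<leftarrow>ys. (real x)^2)))"
proof -
  obtain S where S: "asz S = xs" "bsz S = ys" "\<forall>bt\<in>set S. 0 < snd bt"
      "\<forall>i. Suc i < length S \<longrightarrow> fst (S ! i) \<noteq> fst (S ! Suc i)"
  proof (cases "s \<le> r")
    case True
    have "length ys \<le> length xs" "length xs \<le> Suc (length ys)" using True rs ys xs by auto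
    from mk_filter[OF this, of TA] have "asz (mk TA xs ys) = xs" "bsz (mk TA xs ys) = ys"
      by (auto simp: asz_def bsz_def)
    moreover have "\<forall>bt\<in>set (mk TA xs ys). 0 < snd bt" using mk_set ys xs by blast
    ultimately show ?thesis using that mk_alt by blast
  next
    case False
    have "length xs \<le> length ys" "length ys \<le> Suc (length xs)" using False rs ys xs by auto
    from mk_filter[OF this, of TB] have "asz (mk TB ys xs) = xs" "bsz (mk TB ys xs) = ys"
      by (auto simp: asz_def bsz_def)
    moreover have "\<forall>bt\<in>set (mk TB ys xs). 0 < snd bt" using mk_set ys xs by blast
    ultimately show ?thesis using that mk_alt by blast
  qed
  have v: "valid_schedule a b S"
    unfolding valid_schedule_def using S xs ys by (auto simp: asz_def bsz_def)
  have "fopt kA kB tA tB a b \<le> ereal (sched_time kA kB tA tB S)"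
    unfolding fopt_def by (rule Inf_lower) (use v in blast)
  also have "sched_time kA kB tA tB S = (real r * tA + kA * (\<Sum>x\<leftarrow>xs. (real x)^2))
            + (real s * tB + kB * (\<Sum>x\<leftarrow>ys. (real x)^2))"
    using sched_split[of kA kB tA tB S] S xs ys by simp
  finally show ?thesis .
qed


lemma sq_mono:
  assumes "nsq ys \<le> nsq xs" "k \<ge> 0"
  shows "k * (\<Sum>x\<leftarrow>ys. (real x)^2) \<le> k * (\<Sum>x\<leftarrow>xs. (real x)^2)"
  using assms by (simp add: real_nsq[symmetric] mult_left_mono)

lemma lower:
  fixes kA kB tA tB :: real and a b :: nat
  assumes "kA \<ge> 0" "kB \<ge> 0" "tA \<ge> 0" "tB \<ge> 0"
  shows "Min ((\<lambda>s. cost kA kB tA tB a b s) ` {0..min b (a + 1)}) \<le> fopt kA kB tA tB a b"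
  unfolding fopt_def
proof (rule Inf_greatest)
  fix z assume "z \<in> {ereal (sched_time kA kB tA tB S) |S. valid_schedule a b S}"
  then obtain S where v: "valid_schedule a b S" and z: "z = ereal (sched_time kA kB tA tB S)" by blast
  define A where "A = asz S"
  define B where "B = bsz S"
  have pos: "\<forall>bt\<in>set S. 0 < snd bt" and alt: "\<forall>i. Suc i < length S \<longrightarrow> fst (S ! i) \<noteq> fst (S ! Suc i)"
    and sa: "sum_list A = a" and sb: "sum_list B = b"
    using v unfolding valid_schedule_def A_def B_def asz_def bsz_def by auto
  have "\<forall>x\<in>set A. 0 < x" "\<forall>x\<in>set B. 0 < x" using pos unfolding A_def B_def asz_def bsz_def by auto
  then have la: "length A \<le> a" and lb: "length B \<le> b" using pos_len sa sb by metis+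
  have c: "length B \<le> Suc (length A)" "length A \<le> Suc (length B)"
    using alt_counts[OF alt] unfolding A_def B_def by auto
  have sin: "length B \<in> {0..min b (a + 1)}" using la lb c by auto
  have "Min ((\<lambda>s. cost kA kB tA tB a b s) ` {0..min b (a + 1)}) \<le> cost kA kB tA tB a b (length B)"
    using sin by (intro Min_le) auto
  also have "\<dots> = cost1 tB kB b (length B) + mcost1 tA kA a (length B)" by (simp add: cost_def)
  also have "\<dots> \<le> ereal (real (length B) * tB + kB * (\<Sum>x\<leftarrow>B. (real x)^2))
                 + ereal (real (length A) * tA + kA * (\<Sum>x\<leftarrow>A. (real x)^2))"
  proof (rule add_mono)
    show "cost1 tB kB b (length B) \<le> ereal (real (length B) * tB + kB * (\<Sum>x\<leftarrow>B. (real x)^2))"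
      using cost1_le sb by blast
    have fin: "finite {s'. s' \<le> length B + 1 \<and> length B \<le> s' + 1}" by (rule finite_subset[of _ "{..length B + 1}"]) auto
    have "mcost1 tA kA a (length B) \<le> cost1 tA kA a (length A)"
      unfolding mcost1_def using c fin by (intro Min_le) auto
    also have "\<dots> \<le> ereal (real (length A) * tA + kA * (\<Sum>x\<leftarrow>A. (real x)^2))"
      using cost1_le sa by blast
    finally show "mcost1 tA kA a (length B) \<le> ereal (real (length A) * tA + kA * (\<Sum>x\<leftarrow>A. (real x)^2))" .
  qed
  also have "\<dots> = z" unfolding z sched_split[of kA kB tA tB S] A_def B_def by simp
  finally show "Min ((\<lambda>s. cost kA kB tA tB a b s) ` {0..min b (a + 1)}) \<le> z" .
qed


lemma sum_filter_pos: "sum_list (filter (\<lambda>x. 0 < x) xs) = sum_list (xs::nat list)"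
  by (induction xs) auto

lemma nsq_filter_pos: "nsq (filter (\<lambda>x. 0 < x) xs) = nsq xs"
  by (induction xs) (auto simp: nsq_def)

lemma nsq_app_zeros: "nsq (xs @ replicate n 0) = nsq xs"
  by (induction n) (auto simp: nsq_def)

lemma Aside:
  assumes "length xs = s'" "sum_list xs = a" "s' \<le> Suc s0" "s0 \<le> Suc s'" "s0 \<le> Suc a"
    "tA \<ge> 0" "kA \<ge> 0"
  shows "\<exists>xs' r. (\<forall>x\<in>set xs'. 0 < x) \<and> length xs' = r \<and> sum_list xs' = a \<and> r \<le> Suc s0 \<and> s0 \<le> Suc r \<and>
     real r * tA + kA * (\<Sum>x\<leftarrow>xs'. (real x)^2) \<le> real s' * tA + kA * (\<Sum>x\<leftarrow>xs. (real x)^2)"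
proof (cases "s' \<le> a")
  case True
  obtain xs' where "length xs' = length xs" "sum_list xs' = sum_list xs" "\<forall>y\<in>set xs'. 0 < y" "nsq xs' \<le> nsq xs"
    using spread[of xs] True assms by auto
  then show ?thesis using assms sq_mono[of xs' xs kA]
    by (intro exI[of _ xs'] exI[of _ s']) auto
next
  case False
  define p where "p = filter (\<lambda>x. 0 < x) xs"
  have sp: "sum_list p = a" using sum_filter_pos assms unfolding p_def by simp
  have lp: "length p \<le> a" using pos_len[of p] sp unfolding p_def by auto
  define zs where "zs = p @ replicate (a - length p) 0"
  have lz: "length zs = a" using lp unfolding zs_def by simp
  have sz: "sum_list zs = a" using sp unfolding zs_def by simp
  have nz: "nsq zs = nsq xs" unfolding zs_def p_def by (simp add: nsq_app_zeros nsq_filter_pos)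
  obtain xs' where x': "length xs' = a" "sum_list xs' = a" "\<forall>y\<in>set xs'. 0 < y" "nsq xs' \<le> nsq xs"
    using spread[of zs] lz sz nz by auto
  have "real a * tA \<le> real s' * tA" using False assms by (intro mult_right_mono) auto
  moreover have "kA * (\<Sum>x\<leftarrow>xs'. (real x)^2) \<le> kA * (\<Sum>x\<leftarrow>xs. (real x)^2)"
    using sq_mono[of xs' xs kA] x' assms by auto
  ultimately show ?thesis using x' assms False
    by (intro exI[of _ xs'] exI[of _ a]) auto
qed

lemma upper:
  fixes kA kB tA tB :: real and a b :: nat
  assumes "kA \<ge> 0" "kB \<ge> 0" "tA \<ge> 0" "tB \<ge> 0"
  shows "fopt kA kB tA tB a b \<le> Min ((\<lambda>s. cost kA kB tA tB a b s) ` {0..min b (a + 1)})"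
proof -
  have "Min ((\<lambda>s. cost kA kB tA tB a b s) ` {0..min b (a + 1)}) \<in> (\<lambda>s. cost kA kB tA tB a b s) ` {0..min b (a + 1)}"
    by (intro Min_in) auto
  then obtain s0 where s0: "s0 \<in> {0..min b (a + 1)}"
    and m: "Min ((\<lambda>s. cost kA kB tA tB a b s) ` {0..min b (a + 1)}) = cost kA kB tA tB a b s0"
    by (metis (no_types, lifting) imageE)
  have fin: "finite {s'. s' \<le> s0 + 1 \<and> s0 \<le> s' + 1}" by (rule finite_subset[of _ "{..s0 + 1}"]) auto
  have "mcost1 tA kA a s0 \<in> (\<lambda>s'. cost1 tA kA a s') ` {s'. s' \<le> s0 + 1 \<and> s0 \<le> s' + 1}"
    unfolding mcost1_def using fin by (intro Min_in) auto
  then obtain s' where s': "s' \<le> s0 + 1" "s0 \<le> s' + 1" and mc: "mcost1 tA kA a s0 = cost1 tA kA a s'" by auto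
  have cs: "cost kA kB tA tB a b s0 = cost1 tB kB b s0 + cost1 tA kA a s'" by (simp add: cost_def mc)
  show ?thesis
  proof (cases "cost1 tB kB b s0 = \<infinity> \<or> cost1 tA kA a s' = \<infinity>")
    case True
    have "cost kA kB tA tB a b s0 = \<infinity>"
      using True cost1_cases[of tB kB b s0] cost1_cases[of tA kA a s'] unfolding cs by auto
    then show ?thesis using m by simp
  next
    case False
    then obtain ys xs where ys: "length ys = s0" "sum_list ys = b"
        "cost1 tB kB b s0 = ereal (real s0 * tB + kB * (\<Sum>x\<leftarrow>ys. (real x)^2))"
      and xs: "length xs = s'" "sum_list xs = a"
        "cost1 tA kA a s' = ereal (real s' * tA + kA * (\<Sum>x\<leftarrow>xs. (real x)^2))"
      using cost1_cases[of tB kB b s0] cost1_cases[of tA kA a s'] by auto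
    obtain ys' where y': "length ys' = s0" "sum_list ys' = b" "\<forall>y\<in>set ys'. 0 < y" "nsq ys' \<le> nsq ys"
      using spread[of ys] ys s0 by auto
    obtain xs' r where x': "\<forall>x\<in>set xs'. 0 < x" "length xs' = r" "sum_list xs' = a" "r \<le> Suc s0" "s0 \<le> Suc r"
       "real r * tA + kA * (\<Sum>x\<leftarrow>xs'. (real x)^2) \<le> real s' * tA + kA * (\<Sum>x\<leftarrow>xs. (real x)^2)"
      using Aside[OF xs(1,2), of s0 tA kA] s' s0 assms by auto
    have "fopt kA kB tA tB a b \<le> ereal ((real r * tA + kA * (\<Sum>x\<leftarrow>xs'. (real x)^2))
            + (real s0 * tB + kB * (\<Sum>x\<leftarrow>ys'. (real x)^2)))"
      using build[OF y'(3,1,2) x'(1,2,3,4,5)] .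
    also have "\<dots> \<le> ereal ((real s' * tA + kA * (\<Sum>x\<leftarrow>xs. (real x)^2))
            + (real s0 * tB + kB * (\<Sum>x\<leftarrow>ys. (real x)^2)))"
      using x'(6) sq_mono[OF y'(4) assms(2)] by simp
    also have "\<dots> = cost kA kB tA tB a b s0" unfolding cs ys(3) xs(3) by (simp add: add.commute)
    finally show ?thesis using m by simp
  qed
qed

theorem lemma1:
  fixes kA kB tA tB :: real and a b :: nat
  assumes "kA \<ge> 0" "kB \<ge> 0" "tA \<ge> 0" "tB \<ge> 0"
  shows "fopt kA kB tA tB a b = Min ((\<lambda>s. cost kA kB tA tB a b s) ` {0..min b (a + 1)})"
  using lower[OF assms] upper[OF assms] by (rule antisym[rotated])

end
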